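(* Let $r\ge0$. Then $$\int_{B(\mathcal{I},r)^c}\mathrm{d}\mu(\mathcal{U})\,\tilde{\mathcal{F}}^\sigma(\mathcal{U})\le\int_{\{U\in\mathrm{U}(d):\|U-I\|_\infty>r\}}\mathrm{d}\mu(U)\,F^\sigma(U),$$ where $B(\mathcal{I},r)^c=\{\mathcal{U}\in\mathcal{U}(d):\mathrm{D}(\mathcal{U},\mathcal{I})>r\}$.
   Context: $\mathcal{U}(d)$ is the set of unitary channels on $\mathbb{C}^d$, $\mathcal{I}$ the identity channel, $\mathrm{D}(\mathcal{U},\mathcal{V})=\min_\varphi\|U-e^{i\varphi}V\|_\infty$, $\mu$ the Haar probability measure (on $\mathrm{U}(d)$ and its pushforward on $\mathcal{U}(d)$). For $\sigma>0$, $f^\sigma_p(\boldsymbol\varphi)=\sum_{\mathbf{k}\in\mathbb{Z}^d}(\sqrt{2\pi}\sigma)^{-d}e^{-|\boldsymbol\varphi+2\pi\mathbf{k}|^2/(2\sigma^2)}$ on $[-\pi,\pi]^d$; $F^\sigma(U)=f^\sigma_p(\varphi_1,\dots,\varphi_d)$ where $e^{i\varphi_j}$ are the eigenvalues of $U$; $\tilde{\mathcal{F}}^\sigma(U)=\frac1{2\pi}\int_0^{2\pi}F^\sigma(e^{i\phi}U)\,\mathrm{d}\phi$, a phase-invariant function regarded as a function on $\mathcal{U}(d)$. *)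

theory Defs
  imports "HOL-Probability.Probability"
begin

text \<open>Matrices in U(d) are modelled as complex^'n^'n with d = CARD('n).\<close>

definition ctrans :: "complex^'n^'n \<Rightarrow> complex^'n^'n" where
  "ctrans U = (\<chi> i j. cnj (U $ j $ i))"

definition unitary_mat :: "complex^'n^'n \<Rightarrow> bool" where
  "unitary_mat U \<longleftrightarrow> ctrans U ** U = mat 1 \<and> U ** ctrans U = mat 1"

definition unitary_group :: "(complex^'n^'n) set" where
  "unitary_group = {U. unitary_mat U}"

definition opnorm :: "complex^'n^'n \<Rightarrow> real" where
  "opnorm A = onorm (\<lambda>x. A *v x)"

definition chan_dist :: "complex^'n^'n \<Rightarrow> complex^'n^'n \<Rightarrow> real" where
  "chan_dist U V = (INF \<phi>::real. opnorm (U - mat (exp (\<i> * of_real \<phi>)) ** V))"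

definition fp :: "real \<Rightarrow> ('n::finite \<Rightarrow> real) \<Rightarrow> real" where
  "fp \<sigma> \<phi> = (\<Sum>\<^sub>\<infinity> k \<in> (UNIV :: ('n \<Rightarrow> int) set).
      (sqrt (2*pi) * \<sigma>) powi (- int CARD('n)) *
      exp (- (\<Sum>i\<in>UNIV. (\<phi> i + 2 * pi * real_of_int (k i))^2) / (2 * \<sigma>^2)))"

text \<open>\<open>\<phi>\<close> lists eigenphases of U (with multiplicity): the characteristic polynomial of U
  is \<open>\<Prod>_j (z - e^{i\<phi>_j})\<close>.\<close>
definition eigenphases :: "complex^'n^'n \<Rightarrow> ('n \<Rightarrow> real) \<Rightarrow> bool" where
  "eigenphases U \<phi> \<longleftrightarrow> (\<forall>z::complex. det (mat z - U) = (\<Prod>j\<in>UNIV. z - exp (\<i> * of_real (\<phi> j))))"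

definition Fsig :: "real \<Rightarrow> complex^'n^'n \<Rightarrow> real" where
  "Fsig \<sigma> U = fp \<sigma> (SOME \<phi>. eigenphases U \<phi>)"

definition Ftilde :: "real \<Rightarrow> complex^'n^'n \<Rightarrow> real" where
  "Ftilde \<sigma> U = (1 / (2*pi)) * (LINT \<phi>:{0..2*pi}|lborel. Fsig \<sigma> (mat (exp (\<i> * of_real \<phi>)) ** U))"

text \<open>Haar probability measure on U(d): Borel probability measure on the unitary group,
  invariant under left multiplication (this characterizes it uniquely).\<close>
definition haar_measure :: "(complex^'n^'n) measure \<Rightarrow> bool" where
  "haar_measure M \<longleftrightarrow> prob_space M \<and>
     sets M = sets (restrict_space borel unitary_group) \<and>
     space M = unitary_group \<and>
     (\<forall>V\<in>unitary_group. distr M M (\<lambda>U. V ** U) = M)"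

end

theory Submission
  imports Defs "HOL-Computational_Algebra.Fundamental_Theorem_Algebra"
begin

definition ee :: "real \<Rightarrow> real \<Rightarrow> int \<Rightarrow> real" where
  "ee \<sigma> x k = exp (- ((x + 2 * pi * real_of_int k)^2) / (2 * \<sigma>^2))"

definition gg :: "real \<Rightarrow> real \<Rightarrow> real" where
  "gg \<sigma> x = (\<Sum>\<^sub>\<infinity>k\<in>(UNIV::int set). ee \<sigma> x k)"

lemma ee_nonneg: "0 \<le> ee \<sigma> x k"
  by (simp add: ee_def)

lemma geom_int_summable:
  fixes q :: real assumes "0 \<le> q" "q < 1"
  shows "(\<lambda>k::int. q ^ nat \<bar>k\<bar>) summable_on UNIV"
proof -
  have g: "(\<lambda>n::nat. q ^ n) summable_on UNIV"
    using assms by (subst summable_on_UNIV_nonneg_real_iff) (auto intro: summable_geometric)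
  have 1: "(\<lambda>k::int. q ^ nat \<bar>k\<bar>) summable_on (int ` UNIV)"
    by (subst summable_on_reindex) (use g in \<open>auto simp: o_def inj_on_def\<close>)
  have 2: "(\<lambda>k::int. q ^ nat \<bar>k\<bar>) summable_on ((\<lambda>n. - int n) ` UNIV)"
    by (subst summable_on_reindex) (use g in \<open>auto simp: o_def inj_on_def\<close>)
  have "UNIV = int ` UNIV \<union> (\<lambda>n. - int n) ` (UNIV :: nat set)"
  proof -
    have "k \<in> int ` UNIV \<union> (\<lambda>n. - int n) ` (UNIV :: nat set)" for k :: int
    proof (cases "k \<ge> 0")
      case True then show ?thesis by (auto intro!: image_eqI[of _ _ "nat k"])
    next
      case False then show ?thesis by (auto intro!: image_eqI[of _ _ "nat (-k)"])
    qed
    then show ?thesis by blast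
  qed
  then show ?thesis using summable_on_union[OF 1 2] by simp
qed

definition aa :: "real \<Rightarrow> real" where "aa \<sigma> = 2 * pi^2 / \<sigma>^2"

lemma ee_bound:
  assumes "\<sigma> > 0" "\<bar>x\<bar> \<le> 2 * pi"
  shows "ee \<sigma> x k \<le> exp (aa \<sigma>) * exp (- aa \<sigma>) ^ nat \<bar>k\<bar>"
proof (cases "k = 0")
  case True
  have "ee \<sigma> x k \<le> 1" by (simp add: ee_def)
  also have "1 \<le> exp (aa \<sigma>)" using assms by (simp add: aa_def)
  finally show ?thesis using True by simp
next
  case False
  define t where "t = \<bar>k\<bar> - 1"
  have t0: "t \<ge> 0" using False by (simp add: t_def)
  have "\<bar>x + 2 * pi * real_of_int k\<bar> \<ge> 2 * pi * real_of_int \<bar>k\<bar> - \<bar>x\<bar>"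
  proof -
    have "\<bar>2 * pi * real_of_int k\<bar> = 2 * pi * real_of_int \<bar>k\<bar>" by (simp add: abs_mult)
    then show ?thesis by linarith
  qed
  then have h1: "\<bar>x + 2 * pi * real_of_int k\<bar> \<ge> 2 * pi * real_of_int t"
    using assms by (simp add: t_def algebra_simps)
  have tt: "real_of_int t \<le> (real_of_int t)^2"
    using t0 by (cases "t = 0") (auto simp: power2_eq_square)
  have p0: "0 \<le> 2 * pi * real_of_int t" using t0 by simp
  have "(2 * pi * real_of_int t)^2 \<le> \<bar>x + 2 * pi * real_of_int k\<bar>^2"
    by (rule power_mono[OF h1 p0])
  then have h2a: "(2 * pi * real_of_int t)^2 \<le> (x + 2 * pi * real_of_int k)^2"
    by simp
  have "4 * pi^2 * real_of_int t \<le> 4 * pi^2 * (real_of_int t)^2"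
    by (rule mult_left_mono[OF tt]) simp
  also have "\<dots> = (2 * pi * real_of_int t)^2" by (simp add: power_mult_distrib)
  finally have h2: "4 * pi^2 * real_of_int t \<le> (x + 2 * pi * real_of_int k)^2"
    using h2a by linarith
  have "- ((x + 2 * pi * real_of_int k)^2) / (2 * \<sigma>^2) \<le> - (4 * pi^2 * real_of_int t) / (2 * \<sigma>^2)"
    by (rule divide_right_mono) (use h2 in auto)
  then have "ee \<sigma> x k \<le> exp (- (4 * pi^2 * real_of_int t) / (2 * \<sigma>^2))"
    unfolding ee_def by simp
  also have "- (4 * pi^2 * real_of_int t) / (2 * \<sigma>^2) = aa \<sigma> + real (nat \<bar>k\<bar>) * (- aa \<sigma>)"
    using False assms by (simp add: aa_def t_def field_simps of_nat_nat)
  also have "exp \<dots> = exp (aa \<sigma>) * exp (- aa \<sigma>) ^ nat \<bar>k\<bar>"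
    by (simp only: exp_add exp_of_nat_mult)
  finally show ?thesis .
qed

lemma bb_summable:
  assumes "\<sigma> > 0"
  shows "(\<lambda>k::int. exp (aa \<sigma>) * exp (- aa \<sigma>) ^ nat \<bar>k\<bar>) summable_on UNIV"
  using assms by (intro summable_on_cmult_right geom_int_summable) (auto simp: aa_def)

lemma ee_shift: "ee \<sigma> (x + 2 * pi * real_of_int m) k = ee \<sigma> x (k + m)"
  by (simp add: ee_def algebra_simps)

lemma shift_bij: "bij_betw (\<lambda>k::int. k + m) UNIV UNIV"
  by (rule bij_betwI[of _ _ _ "\<lambda>k. k - m"]) auto

lemma round_red: "\<exists>m::int. \<bar>x + 2 * pi * real_of_int m\<bar> \<le> pi"
proof -
  define m where "m = - round (x / (2*pi))"
  have "\<bar>real_of_int (round (x / (2*pi))) - x / (2*pi)\<bar> \<le> 1/2" by (rule of_int_round_abs_le)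
  then have "\<bar>2*pi * (real_of_int (round (x / (2*pi))) - x / (2*pi))\<bar> \<le> 2*pi * (1/2)"
    by (simp add: abs_mult)
  then have "\<bar>x + 2 * pi * real_of_int m\<bar> \<le> pi"
    by (simp add: m_def algebra_simps abs_minus_commute)
  then show ?thesis by blast
qed

lemma ee_summable_small:
  assumes "\<sigma> > 0" "\<bar>x\<bar> \<le> 2 * pi"
  shows "ee \<sigma> x summable_on UNIV"
  by (rule summable_on_comparison_test[OF bb_summable[OF assms(1)]])
     (use ee_bound[OF assms] ee_nonneg in auto)

lemma ee_summable:
  assumes "\<sigma> > 0"
  shows "ee \<sigma> x summable_on UNIV"
proof -
  obtain m where m: "\<bar>x + 2 * pi * real_of_int m\<bar> \<le> pi" using round_red by blast
  have "ee \<sigma> (x + 2 * pi * real_of_int m) summable_on UNIV"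
    using m assms by (intro ee_summable_small) auto
  moreover have "(\<lambda>k. ee \<sigma> x (k + m)) = ee \<sigma> (x + 2 * pi * real_of_int m)" by (simp add: fun_eq_iff ee_shift)
  ultimately have "(\<lambda>k. ee \<sigma> x (k + m)) summable_on UNIV" by simp
  then show ?thesis using summable_on_reindex_bij_betw[OF shift_bij[of m], of "ee \<sigma> x"] by simp
qed

lemma gg_shift: "gg \<sigma> (x + 2 * pi * real_of_int m) = gg \<sigma> x"
  unfolding gg_def ee_shift using infsum_reindex_bij_betw[OF shift_bij[of m], of "ee \<sigma> x"] by simp

lemma gg_nonneg: "0 \<le> gg \<sigma> x"
  unfolding gg_def by (intro infsum_nonneg ee_nonneg)

definition Bg :: "real \<Rightarrow> real" where
  "Bg \<sigma> = (\<Sum>\<^sub>\<infinity>k\<in>(UNIV::int set). exp (aa \<sigma>) * exp (- aa \<sigma>) ^ nat \<bar>k\<bar>)"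

lemma gg_le_small:
  assumes "\<sigma> > 0" "\<bar>x\<bar> \<le> 2 * pi"
  shows "gg \<sigma> x \<le> Bg \<sigma>"
  unfolding gg_def Bg_def
  by (rule infsum_mono[OF ee_summable_small[OF assms] bb_summable[OF assms(1)]])
     (use ee_bound[OF assms] in auto)

lemma gg_le:
  assumes "\<sigma> > 0"
  shows "gg \<sigma> x \<le> Bg \<sigma>"
proof -
  obtain m where m: "\<bar>x + 2 * pi * real_of_int m\<bar> \<le> pi" using round_red by blast
  then have "gg \<sigma> (x + 2 * pi * real_of_int m) \<le> Bg \<sigma>"
    using assms by (intro gg_le_small) auto
  then show ?thesis by (simp add: gg_shift)
qed

lemma gg_cont_small:
  assumes "\<sigma> > 0"
  shows "continuous_on {-2*pi..2*pi} (gg \<sigma>)"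
proof (rule uniform_limit_theorem[where F = "finite_subsets_at_top UNIV"
        and f = "\<lambda>F x. \<Sum>k\<in>F. ee \<sigma> x k"])
  show "\<forall>\<^sub>F F in finite_subsets_at_top UNIV. continuous_on {-2*pi..2*pi} (\<lambda>x. \<Sum>k\<in>F. ee \<sigma> x k)"
    unfolding ee_def using assms by (intro always_eventually allI continuous_intros) auto
  show "finite_subsets_at_top UNIV \<noteq> bot" by (rule finite_subsets_at_top_neq_bot)
  define b where "b = (\<lambda>k::int. exp (aa \<sigma>) * exp (- aa \<sigma>) ^ nat \<bar>k\<bar>)"
  have bs: "b summable_on UNIV" unfolding b_def by (rule bb_summable[OF assms])
  have lim: "(sum b \<longlongrightarrow> infsum b UNIV) (finite_subsets_at_top UNIV)"
    using bs has_sum_def has_sum_infsum by blast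
  show "uniform_limit {-2*pi..2*pi} (\<lambda>F x. \<Sum>k\<in>F. ee \<sigma> x k) (gg \<sigma>) (finite_subsets_at_top UNIV)"
    unfolding uniform_limit_iff
  proof (intro allI impI)
    fix e :: real assume e: "e > 0"
    have ev: "\<forall>\<^sub>F F in finite_subsets_at_top UNIV. dist (sum b F) (infsum b UNIV) < e"
      using tendstoD[OF lim e] .
    have ev2: "\<forall>\<^sub>F F in finite_subsets_at_top UNIV. finite F"
      by (simp add: eventually_finite_subsets_at_top_weakI)
    show "\<forall>\<^sub>F F in finite_subsets_at_top UNIV. \<forall>x\<in>{-2*pi..2*pi}. dist (\<Sum>k\<in>F. ee \<sigma> x k) (gg \<sigma> x) < e"
      using ev ev2
    proof eventually_elim
      case (elim F)
      show ?case
      proof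
        fix x :: real assume x: "x \<in> {-2*pi..2*pi}"
        then have xa: "\<bar>x\<bar> \<le> 2 * pi" by auto
        have s1: "ee \<sigma> x summable_on UNIV" by (rule ee_summable_small[OF assms xa])
        have s1F: "ee \<sigma> x summable_on F" using elim by simp
        have sbF: "b summable_on F" using elim by simp
        have "gg \<sigma> x - (\<Sum>k\<in>F. ee \<sigma> x k) = infsum (ee \<sigma> x) (UNIV - F)"
          unfolding gg_def using infsum_Diff[OF s1 s1F] elim by simp
        also have "\<dots> \<le> infsum b (UNIV - F)"
          by (rule infsum_mono) (use summable_on_subset_banach[OF s1] summable_on_subset_banach[OF bs]
              ee_bound[OF assms xa] b_def in auto)
        also have "\<dots> = infsum b UNIV - sum b F"
          using infsum_Diff[OF bs sbF] elim by simp
        finally have le: "gg \<sigma> x - (\<Sum>k\<in>F. ee \<sigma> x k) \<le> infsum b UNIV - sum b F" .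
        have ge: "(\<Sum>k\<in>F. ee \<sigma> x k) \<le> gg \<sigma> x"
        proof -
          have "(\<Sum>k\<in>F. ee \<sigma> x k) = infsum (ee \<sigma> x) F" using elim by simp
          also have "\<dots> \<le> gg \<sigma> x" unfolding gg_def
            by (rule infsum_mono2) (use s1 s1F ee_nonneg in auto)
          finally show ?thesis .
        qed
        have "infsum b UNIV - sum b F < e" using elim(1) by (simp add: dist_real_def)
        then show "dist (\<Sum>k\<in>F. ee \<sigma> x k) (gg \<sigma> x) < e"
          using le ge by (simp add: dist_real_def)
      qed
    qed
  qed
qed

lemma gg_isCont:
  assumes "\<sigma> > 0"
  shows "isCont (gg \<sigma>) x"
proof -
  obtain m where m: "\<bar>x + 2 * pi * real_of_int m\<bar> \<le> pi" using round_red by blast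
  have "x + 2 * pi * real_of_int m \<in> interior {-2*pi..2*pi}"
  proof -
    have "-pi \<le> x + 2 * pi * real_of_int m" "x + 2 * pi * real_of_int m \<le> pi" using m by linarith+
    moreover have "0 < pi" by (rule pi_gt_zero)
    ultimately have "- (2 * pi) < x + 2 * pi * real_of_int m" "x + 2 * pi * real_of_int m < 2 * pi" by linarith+
    then show ?thesis by (simp add: interior_atLeastAtMost_real)
  qed
  then have c: "isCont (gg \<sigma>) (x + 2 * pi * real_of_int m)"
    using continuous_on_interior[OF gg_cont_small[OF assms]] by blast
  have "isCont (\<lambda>y. gg \<sigma> (y + 2 * pi * real_of_int m)) x"
  proof (rule isCont_o2[where f = "\<lambda>y. y + 2 * pi * real_of_int m"])
    show "isCont (\<lambda>y. y + 2 * pi * real_of_int m) x" by (intro continuous_intros)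
  qed (use c in simp)
  then show ?thesis by (simp add: gg_shift)
qed

lemma fp_prod:
  fixes \<phi> :: "'n::finite \<Rightarrow> real"
  assumes "\<sigma> > 0"
  shows "fp \<sigma> \<phi> = (sqrt (2*pi) * \<sigma>) powi (- int CARD('n)) * (\<Prod>i\<in>UNIV. gg \<sigma> (\<phi> i))"
proof -
  define C where "C = (sqrt (2*pi) * \<sigma>) powi (- int CARD('n))"
  have t: "exp (- (\<Sum>i\<in>UNIV. (\<phi> i + 2 * pi * real_of_int (k i))^2) / (2 * \<sigma>^2)) = (\<Prod>i\<in>UNIV. ee \<sigma> (\<phi> i) (k i))" for k :: "'n \<Rightarrow> int"
  proof -
    have "- (\<Sum>i\<in>UNIV. (\<phi> i + 2 * pi * real_of_int (k i))^2) / (2 * \<sigma>^2) = (\<Sum>i\<in>UNIV. - ((\<phi> i + 2 * pi * real_of_int (k i))^2) / (2 * \<sigma>^2))"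
      by (simp add: sum_divide_distrib sum_negf)
    then show ?thesis by (simp add: ee_def exp_sum)
  qed
  have "fp \<sigma> \<phi> = (\<Sum>\<^sub>\<infinity>k\<in>(UNIV::('n\<Rightarrow>int) set). C * (\<Prod>i\<in>UNIV. ee \<sigma> (\<phi> i) (k i)))"
    unfolding fp_def t C_def ..
  also have "\<dots> = C * (\<Sum>\<^sub>\<infinity>k\<in>(UNIV::('n\<Rightarrow>int) set). \<Prod>i\<in>UNIV. ee \<sigma> (\<phi> i) (k i))"
    by (rule infsum_cmult_right')
  also have "(\<Sum>\<^sub>\<infinity>k\<in>(UNIV::('n\<Rightarrow>int) set). \<Prod>i\<in>UNIV. ee \<sigma> (\<phi> i) (k i)) = (\<Prod>i\<in>UNIV. gg \<sigma> (\<phi> i))"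
  proof -
    have "(\<Sum>\<^sub>\<infinity>k\<in>(Pi\<^sub>E UNIV (\<lambda>_. UNIV)). \<Prod>i\<in>UNIV. ee \<sigma> (\<phi> i) (k i)) = (\<Prod>i\<in>UNIV. infsum (ee \<sigma> (\<phi> i)) UNIV)"
      by (rule infsum_prod_PiE_abs) (simp_all add: abs_of_nonneg ee_nonneg ee_summable[OF assms])
    then show ?thesis by (simp add: gg_def PiE_UNIV)
  qed
  finally show ?thesis by (simp add: C_def)
qed

lemma gg_arg:
  assumes "\<sigma> > 0"
  shows "gg \<sigma> x = gg \<sigma> (Arg (exp (\<i> * complex_of_real x)))"
proof -
  define z where "z = exp (\<i> * complex_of_real x)"
  have "cmod z = 1" by (simp add: z_def)
  then have "exp (\<i> * complex_of_real (Arg z)) = z" using complex_norm_eq_1_exp_eq by blast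
  then have "exp (\<i> * complex_of_real (Arg z)) = exp (\<i> * complex_of_real x)" by (simp add: z_def)
  then obtain n :: int where n: "\<i> * complex_of_real (Arg z) = \<i> * complex_of_real x + complex_of_real (real_of_int (2 * n) * pi) * \<i>"
    using exp_eq by blast
  have "Arg z = x + 2 * pi * real_of_int n"
  proof -
    have "Im (\<i> * complex_of_real (Arg z)) = Im (\<i> * complex_of_real x + complex_of_real (real_of_int (2 * n) * pi) * \<i>)"
      using n by simp
    then show ?thesis by simp
  qed
  then show ?thesis by (simp add: z_def gg_shift)
qed

lemma order_prod_lin:
  fixes c :: "'a \<Rightarrow> complex"
  assumes "finite A"
  shows "order a (\<Prod>j\<in>A. [:- c j, 1:]) = card {j\<in>A. c j = a}"
  using assms
proof (induction A rule: finite_induct)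
  case empty
  then show ?case by simp
next
  case (insert x A)
  have nz: "(\<Prod>j\<in>A. [:- c j, 1:]) \<noteq> 0"
    using insert.hyps(1) by (simp add: prod_zero_iff)
  have nz1: "[:- c x, 1:] \<noteq> 0" by simp
  have nz2: "[:- c x, 1:] * (\<Prod>j\<in>A. [:- c j, 1:]) \<noteq> 0" using nz nz1 by (metis mult_eq_0_iff)
  have o1: "order a [:- c x, 1:] = (if c x = a then 1 else 0)"
  proof (cases "c x = a")
    case True
    then show ?thesis using order_power_n_n[of a 1] by simp
  next
    case False
    then have "poly [:- c x, 1:] a \<noteq> 0" by simp
    then show ?thesis using False by (simp add: order_0I)
  qed
  have c1: "card {j\<in>insert x A. c j = a} = (if c x = a then 1 else 0) + card {j\<in>A. c j = a}"
  proof (cases "c x = a")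
    case True
    then have "{j\<in>insert x A. c j = a} = insert x {j\<in>A. c j = a}" by auto
    then show ?thesis using True insert.hyps by simp
  next
    case False
    then have "{j\<in>insert x A. c j = a} = {j\<in>A. c j = a}" by auto
    then show ?thesis using False by simp
  qed
  have "order a (\<Prod>j\<in>insert x A. [:- c j, 1:]) = order a ([:- c x, 1:] * (\<Prod>j\<in>A. [:- c j, 1:]))"
    by (simp only: prod.insert[OF insert.hyps])
  also have "\<dots> = order a [:- c x, 1:] + order a (\<Prod>j\<in>A. [:- c j, 1:])"
    by (rule order_mult[OF nz2])
  also have "\<dots> = card {j\<in>insert x A. c j = a}"
    by (simp only: o1 c1 insert.IH)
  finally show ?case .
qed

lemma eig_card_eq:
  fixes U :: "complex^'n^'n"
  assumes "eigenphases U \<phi>" "eigenphases U \<psi>"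
  shows "card {j. exp (\<i> * complex_of_real (\<phi> j)) = a} = card {j. exp (\<i> * complex_of_real (\<psi> j)) = a}"
proof -
  define P where "P \<theta> = (\<Prod>j\<in>(UNIV::'n set). [:- exp (\<i> * complex_of_real (\<theta> j)), 1:])" for \<theta> :: "'n \<Rightarrow> real"
  have pp: "poly (P \<theta>) z = (\<Prod>j\<in>UNIV. z - exp (\<i> * complex_of_real (\<theta> j)))" for \<theta> z
    unfolding P_def by (simp add: poly_prod)
  have "poly (P \<phi>) = poly (P \<psi>)"
    using assms unfolding eigenphases_def by (auto simp: fun_eq_iff pp)
  then have "P \<phi> = P \<psi>" by (simp add: poly_eq_poly_eq_iff)
  then have "order a (P \<phi>) = order a (P \<psi>)" by simp
  then show ?thesis unfolding P_def by (simp add: order_prod_lin)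
qed

lemma prod_h_eq:
  fixes l k :: "'n::finite \<Rightarrow> 'a"
  assumes "\<And>a. card {j. l j = a} = card {j. k j = a}"
  shows "(\<Prod>j\<in>UNIV. h (l j)) = (\<Prod>j\<in>UNIV. (h (k j)::'b::comm_monoid_mult))"
proof -
  have gen: "(\<Prod>j\<in>UNIV. h (m j)) = (\<Prod>y\<in>{y. card {j. m j = y} \<noteq> 0}. h y ^ card {j. m j = y})"
    for m :: "'n \<Rightarrow> 'a"
  proof -
    have "(\<Prod>j\<in>UNIV. h (m j)) = (\<Prod>y\<in>m ` UNIV. \<Prod>j\<in>{j\<in>UNIV. m j = y}. h (m j))"
      by (rule prod.image_gen) simp
    also have "\<dots> = (\<Prod>y\<in>m ` UNIV. h y ^ card {j. m j = y})"
      by (intro prod.cong refl) simp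
    also have "m ` UNIV = {y. card {j. m j = y} \<noteq> 0}"
      by auto
    finally show ?thesis .
  qed
  show ?thesis using gen[of l] gen[of k] assms by simp
qed

lemma fp_eig_eq:
  fixes U :: "complex^'n^'n"
  assumes "\<sigma> > 0" "eigenphases U \<phi>" "eigenphases U \<psi>"
  shows "fp \<sigma> \<phi> = fp \<sigma> \<psi>"
proof -
  define h where "h w = gg \<sigma> (Arg w)" for w
  have "(\<Prod>i\<in>UNIV. gg \<sigma> (\<phi> i)) = (\<Prod>i\<in>UNIV. h (exp (\<i> * complex_of_real (\<phi> i))))"
    unfolding h_def using gg_arg[OF assms(1)] by simp
  also have "\<dots> = (\<Prod>i\<in>UNIV. h (exp (\<i> * complex_of_real (\<psi> i))))"
    by (rule prod_h_eq) (rule eig_card_eq[OF assms(2,3)])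
  also have "\<dots> = (\<Prod>i\<in>UNIV. gg \<sigma> (\<psi> i))"
    unfolding h_def using gg_arg[OF assms(1)] by simp
  finally show ?thesis by (simp add: fp_prod[OF assms(1)])
qed

lemma mat_entry: "(mat c :: 'a::zero^'n^'n) $ i $ j = (if i = j then c else 0)"
  by (simp add: mat_def)

lemma mat_mul_left_entry: "(mat c ** A) $ i $ j = c * (A $ i $ j :: 'a::semiring_1)"
  by (simp add: matrix_matrix_mult_def mat_def if_distrib[of "\<lambda>x. x * y" for y] sum.delta cong: if_cong)

lemma mat_mul_mat: "mat a ** mat b = (mat (a * b) :: 'a::semiring_1^'n^'n)"
  by (simp add: vec_eq_iff mat_mul_left_entry mat_entry)

lemma ctrans_mult: "ctrans (A ** B) = ctrans B ** ctrans (A :: complex^'n^'n)"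
  by (simp add: vec_eq_iff ctrans_def matrix_matrix_mult_def mult.commute)

lemma ctrans_mat: "ctrans (mat c :: complex^'n^'n) = mat (cnj c)"
  by (simp add: vec_eq_iff ctrans_def mat_def)

lemma unitary_mult:
  assumes "unitary_mat A" "unitary_mat B"
  shows "unitary_mat (A ** B :: complex^'n^'n)"
proof -
  have "ctrans (A ** B) ** (A ** B) = ctrans B ** (ctrans A ** A) ** B"
    by (simp add: ctrans_mult matrix_mul_assoc)
  also have "\<dots> = mat 1" using assms by (simp add: unitary_mat_def)
  finally have 1: "ctrans (A ** B) ** (A ** B) = mat 1" .
  have "(A ** B) ** ctrans (A ** B) = A ** (B ** ctrans B) ** ctrans A"
    by (simp add: ctrans_mult matrix_mul_assoc)
  also have "\<dots> = mat 1" using assms by (simp add: unitary_mat_def)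
  finally show ?thesis using 1 by (simp add: unitary_mat_def)
qed

lemma cnj_mult_norm1: "cmod c = 1 \<Longrightarrow> cnj c * c = 1"
  using complex_norm_square[of c] by (simp add: mult.commute)

lemma unitary_mat_scalar:
  assumes "cmod c = 1"
  shows "unitary_mat (mat c :: complex^'n^'n)"
  using cnj_mult_norm1[OF assms]
  by (simp add: unitary_mat_def ctrans_mat mat_mul_mat mult.commute)

lemma unitary_group_phase:
  assumes "U \<in> unitary_group"
  shows "mat (exp (\<i> * complex_of_real t)) ** U \<in> (unitary_group :: (complex^'n^'n) set)"
proof -
  have c: "cmod (exp (\<i> * complex_of_real t)) = 1" by (rule norm_exp_i_times)
  show ?thesis using assms unitary_mult[OF unitary_mat_scalar[OF c]] by (simp add: unitary_group_def)
qed

lemma unitary_norm_preserve: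
  fixes U :: "complex^'n^'n"
  assumes "unitary_mat U"
  shows "(\<Sum>i\<in>UNIV. cnj ((U *v x) $ i) * (U *v x) $ i) = (\<Sum>j\<in>UNIV. cnj (x $ j) * x $ j)"
proof -
  have e: "(\<Sum>i\<in>UNIV. cnj (U$i$j) * U$i$k) = (if j = k then 1 else 0)" for j k
  proof -
    have "(ctrans U ** U) $ j $ k = (mat 1 :: complex^'n^'n) $ j $ k"
      using assms by (simp add: unitary_mat_def)
    then show ?thesis by (simp add: matrix_matrix_mult_def ctrans_def mat_def)
  qed
  have "(\<Sum>i\<in>UNIV. cnj ((U *v x) $ i) * (U *v x) $ i)
      = (\<Sum>i\<in>UNIV. (\<Sum>j\<in>UNIV. cnj (U$i$j) * cnj (x$j)) * (\<Sum>k\<in>UNIV. U$i$k * x$k))"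
    by (simp add: matrix_vector_mult_def)
  also have "\<dots> = (\<Sum>i\<in>UNIV. \<Sum>j\<in>UNIV. \<Sum>k\<in>UNIV. cnj (x$j) * x$k * (cnj (U$i$j) * U$i$k))"
    by (simp only: sum_product) (intro sum.cong refl, simp add: mult_ac)
  also have "\<dots> = (\<Sum>j\<in>UNIV. \<Sum>k\<in>UNIV. \<Sum>i\<in>UNIV. cnj (x$j) * x$k * (cnj (U$i$j) * U$i$k))"
    by (subst sum.swap) (rule sum.cong[OF refl], rule sum.swap)
  also have "\<dots> = (\<Sum>j\<in>UNIV. \<Sum>k\<in>UNIV. cnj (x$j) * x$k * (if j = k then 1 else 0))"
    by (simp add: sum_distrib_left[symmetric] e)
  also have "\<dots> = (\<Sum>j\<in>UNIV. cnj (x$j) * x$j)"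
    by (simp add: if_distrib cong: if_cong)
  finally show ?thesis .
qed

lemma sum_cnj_norm: "(\<Sum>i\<in>A. cnj (f i) * f i) = complex_of_real (\<Sum>i\<in>A. (cmod (f i))^2)"
proof -
  have "cnj w * w = complex_of_real ((cmod w)^2)" for w
    by (subst complex_norm_square) (rule mult.commute)
  then show ?thesis by (simp add: of_real_sum)
qed

lemma eigval_norm1:
  fixes U :: "complex^'n^'n"
  assumes U: "unitary_mat U" and d: "det (mat z - U) = 0"
  shows "cmod z = 1"
proof -
  have "\<not> invertible (mat z - U)" using d invertible_det_nz by blast
  then have "\<not> (\<exists>B. B ** (mat z - U) = mat 1)" using invertible_left_inverse by blast
  then obtain x where x: "(mat z - U) *v x = 0" "x \<noteq> 0"
    using matrix_left_invertible_ker by blast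
  have ux: "(U *v x) $ i = z * x $ i" for i
  proof -
    have "((mat z - U) *v x) $ i = 0" using x by simp
    moreover have "((mat z - U) *v x) $ i = z * x $ i - (U *v x) $ i"
      by (simp add: matrix_vector_mult_def mat_def sum_subtractf algebra_simps
          if_distrib[of "\<lambda>a. a * y" for y] if_distrib[of "\<lambda>a. y * a" for y] cong: if_cong)
    ultimately show ?thesis by simp
  qed
  have "complex_of_real (\<Sum>i\<in>UNIV. (cmod ((U *v x) $ i))^2) = complex_of_real (\<Sum>j\<in>UNIV. (cmod (x $ j))^2)"
    using unitary_norm_preserve[OF U, of x] by (simp only: sum_cnj_norm)
  then have "(\<Sum>i\<in>UNIV. (cmod ((U *v x) $ i))^2) = (\<Sum>j\<in>UNIV. (cmod (x $ j))^2)"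
    by (simp only: of_real_eq_iff)
  then have eq: "(cmod z)^2 * (\<Sum>i\<in>UNIV. (cmod (x $ i))^2) = (\<Sum>j\<in>UNIV. (cmod (x $ j))^2)"
    by (simp add: ux norm_mult power_mult_distrib sum_distrib_left)
  obtain i where "x $ i \<noteq> 0" using x(2) by (auto simp: vec_eq_iff)
  then have "0 < (\<Sum>i\<in>UNIV. (cmod (x $ i))^2)"
    by (intro sum_pos2[where i = i]) auto
  then have "(cmod z)^2 = 1" using eq by simp
  then show ?thesis using norm_ge_zero[of z] by (auto simp: power2_eq_1_iff)
qed

definition cpoly :: "complex^'n^'n \<Rightarrow> complex poly" where
  "cpoly U = det (\<chi> i j. (if i = j then [:0, 1:] else 0) - [:U$i$j:])"

lemma poly_entry: "poly ((if i = j then [:0, 1:] else 0) - [:a:]) z = (if i = j then z else 0) - (a::complex)"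
  by simp

lemma poly_if01: "poly (if b then [:0, 1:] else 0) z = (if b then z else (0::complex))"
  by simp

lemma poly_cpoly: "poly (cpoly U) z = det (mat z - U)"
  unfolding cpoly_def det_def by (simp add: poly_sum poly_prod mat_def poly_entry poly_if01 del: pCons_0_0)

lemma monic_prod_lin:
  fixes c :: "'a \<Rightarrow> complex"
  assumes "finite A"
  shows "degree (\<Prod>j\<in>A. [:- c j, 1:]) = card A \<and> coeff (\<Prod>j\<in>A. [:- c j, 1:]) (card A) = 1"
  using assms
proof (induction A rule: finite_induct)
  case empty
  then show ?case by simp
next
  case (insert x A)
  have nz: "(\<Prod>j\<in>A. [:- c j, 1:]) \<noteq> 0"
    using insert.hyps(1) by (simp add: prod_zero_iff)
  have nz1: "[:- c x, 1:] \<noteq> 0" by simp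
  have p: "(\<Prod>j\<in>insert x A. [:- c j, 1:]) = [:- c x, 1:] * (\<Prod>j\<in>A. [:- c j, 1:])"
    by (simp only: prod.insert[OF insert.hyps])
  have d: "degree (\<Prod>j\<in>insert x A. [:- c j, 1:]) = 1 + card A"
    unfolding p using degree_mult_eq[OF nz1 nz] insert.IH by simp
  have "coeff ([:- c x, 1:] * (\<Prod>j\<in>A. [:- c j, 1:])) (degree [:- c x, 1:] + degree (\<Prod>j\<in>A. [:- c j, 1:]))
      = coeff [:- c x, 1:] (degree [:- c x, 1:]) * coeff (\<Prod>j\<in>A. [:- c j, 1:]) (degree (\<Prod>j\<in>A. [:- c j, 1:]))"
    by (rule coeff_mult_degree_sum)
  then have "coeff (\<Prod>j\<in>insert x A. [:- c j, 1:]) (1 + card A) = 1"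
    unfolding p using insert.IH by simp
  then show ?case using d insert.hyps by simp
qed

lemma card_fix_less:
  fixes p :: "'n::finite \<Rightarrow> 'n"
  assumes "p \<noteq> id"
  shows "card {i. p i = i} < CARD('n)"
proof -
  obtain i where "p i \<noteq> i" using assms by (auto simp: fun_eq_iff)
  then have "{i. p i = i} \<subset> UNIV" by auto
  then show ?thesis by (intro psubset_card_mono) auto
qed

lemma cpoly_deg:
  fixes U :: "complex^'n^'n"
  shows "degree (cpoly U) = CARD('n) \<and> coeff (cpoly U) CARD('n) = 1"
proof -
  define M :: "complex poly^'n^'n" where "M = (\<chi> i j. (if i = j then [:0, 1:] else 0) - [:U$i$j:])"
  define f where "f p = of_int (sign p) * (\<Prod>i\<in>UNIV. M$i$(p i))" for p :: "'n \<Rightarrow> 'n"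
  define S where "S = {p. p permutes (UNIV :: 'n set)}"
  have fS: "finite S" unfolding S_def by (rule finite_permutations) simp
  have idS: "id \<in> S" unfolding S_def by (simp add: permutes_id)
  have cp: "cpoly U = f id + sum f (S - {id})"
    unfolding cpoly_def det_def M_def[symmetric] f_def[symmetric] S_def[symmetric]
    by (rule sum.remove[OF fS idS])
  have Mii: "M$i$i = [:- U$i$i, 1:]" for i by (simp add: M_def)
  have fid: "f id = (\<Prod>i\<in>UNIV. [:- U$i$i, 1:])" by (simp add: f_def sign_id Mii)
  have dfid: "degree (f id) = CARD('n) \<and> coeff (f id) CARD('n) = 1"
    unfolding fid using monic_prod_lin[of "UNIV::'n set" "\<lambda>i. U$i$i"] by simp
  have dM: "degree (M$i$j) \<le> (if j = i then 1 else 0)" for i j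
    by (cases "i = j") (auto simp: M_def)
  have dle: "degree (f p) \<le> CARD('n) - 1" if "p \<in> S - {id}" for p
  proof -
    have "degree (f p) \<le> degree (of_int (sign p) :: complex poly) + degree (\<Prod>i\<in>UNIV. M$i$(p i))"
      unfolding f_def by (rule degree_mult_le)
    also have "\<dots> = degree (\<Prod>i\<in>UNIV. M$i$(p i))" by simp
    also have "\<dots> \<le> (\<Sum>i\<in>UNIV. degree (M$i$(p i)))"
      using degree_prod_sum_le[of "UNIV::'n set" "\<lambda>i. M$i$(p i)"] by (simp add: o_def)
    also have "\<dots> \<le> (\<Sum>i\<in>UNIV. (if p i = i then 1 else 0))"
      by (intro sum_mono dM)
    also have "\<dots> = card {i. p i = i}"
      by (simp add: sum.If_cases)
    finally have "degree (f p) \<le> card {i. p i = i}" .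
    moreover have "card {i. p i = i} < CARD('n)" using that card_fix_less by blast
    ultimately show ?thesis by linarith
  qed
  have drest: "degree (sum f (S - {id})) \<le> CARD('n) - 1"
    by (rule degree_sum_le) (use fS dle in auto)
  have pos: "CARD('n) > 0" by simp
  then have lt: "degree (sum f (S - {id})) < degree (f id)" using drest dfid by linarith
  have "degree (cpoly U) = CARD('n)"
    unfolding cp using degree_add_eq_left[OF lt] dfid by simp
  moreover have "coeff (cpoly U) CARD('n) = 1"
    unfolding cp using dfid lt by (simp add: coeff_eq_0)
  ultimately show ?thesis by simp
qed

lemma eig_exists:
  fixes U :: "complex^'n^'n"
  assumes U: "unitary_mat U"
  shows "\<exists>\<phi>. eigenphases U \<phi> \<and> (\<forall>j. -pi < \<phi> j \<and> \<phi> j \<le> pi)"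
proof -
  obtain root where r: "smult (lead_coeff (cpoly U)) (\<Prod>i<degree (cpoly U). [:-root i, 1:]) = cpoly U"
    using complex_poly_decompose' by blast
  define d where "d = CARD('n)"
  have cp: "cpoly U = (\<Prod>i<d. [:-root i, 1:])" using r cpoly_deg[of U] by (simp add: d_def)
  have det_eq: "det (mat z - U) = (\<Prod>i<d. z - root i)" for z
    using arg_cong[OF cp, of "\<lambda>p. poly p z"] by (simp add: poly_cpoly poly_prod)
  have n1: "cmod (root i) = 1" if "i < d" for i
  proof (rule eigval_norm1[OF U])
    show "det (mat (root i) - U) = 0" using det_eq[of "root i"] that
      by (auto simp: prod_zero_iff intro: bexI[of _ i])
  qed
  obtain h where h: "bij_betw h (UNIV::'n set) {0..<d}"
    using ex_bij_betw_finite_nat[of "UNIV::'n set"] by (auto simp: d_def)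
  define \<phi> where "\<phi> j = Arg (root (h j))" for j
  have e: "exp (\<i> * complex_of_real (\<phi> j)) = root (h j)" for j
  proof -
    have "h j < d" using bij_betwE[OF h] by auto
    then have "cmod (root (h j)) = 1" by (rule n1)
    then show ?thesis unfolding \<phi>_def using complex_norm_eq_1_exp_eq by blast
  qed
  have "eigenphases U \<phi>"
    unfolding eigenphases_def
  proof
    fix z
    have "det (mat z - U) = (\<Prod>i\<in>{0..<d}. z - root i)" by (simp add: det_eq atLeast0LessThan)
    also have "\<dots> = (\<Prod>j\<in>UNIV. z - root (h j))"
      by (rule prod.reindex_bij_betw[OF h, symmetric])
    also have "\<dots> = (\<Prod>j\<in>UNIV. z - exp (\<i> * complex_of_real (\<phi> j)))" by (simp add: e)
    finally show "det (mat z - U) = (\<Prod>j\<in>UNIV. z - exp (\<i> * complex_of_real (\<phi> j)))" .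
  qed
  moreover have "\<forall>j. -pi < \<phi> j \<and> \<phi> j \<le> pi" unfolding \<phi>_def using Arg_bounded by blast
  ultimately show ?thesis by blast
qed

lemma Fsig_eq:
  fixes U :: "complex^'n^'n"
  assumes "\<sigma> > 0" "unitary_mat U" "eigenphases U \<phi>"
  shows "Fsig \<sigma> U = fp \<sigma> \<phi>"
proof -
  have "\<exists>\<psi>. eigenphases U \<psi>" using eig_exists[OF assms(2)] by blast
  then have "eigenphases U (SOME \<psi>. eigenphases U \<psi>)" by (rule someI_ex)
  then show ?thesis unfolding Fsig_def using fp_eig_eq[OF assms(1) _ assms(3)] by blast
qed

definition KK :: "real \<Rightarrow> 'n::finite itself \<Rightarrow> real" where
  "KK \<sigma> _ = (sqrt (2*pi) * \<sigma>) powi (- int CARD('n)) * Bg \<sigma> ^ CARD('n)"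

lemma fp_bounds:
  fixes \<phi> :: "'n::finite \<Rightarrow> real"
  assumes "\<sigma> > 0"
  shows "0 \<le> fp \<sigma> \<phi> \<and> fp \<sigma> \<phi> \<le> KK \<sigma> TYPE('n)"
proof -
  have C: "0 \<le> (sqrt (2*pi) * \<sigma>) powi (- int CARD('n))"
    using assms by (intro zero_le_power_int) auto
  have "(\<Prod>i\<in>UNIV. gg \<sigma> (\<phi> i)) \<le> (\<Prod>i\<in>(UNIV::'n set). Bg \<sigma>)"
    by (intro prod_mono conjI gg_nonneg gg_le[OF assms])
  then have "(\<Prod>i\<in>UNIV. gg \<sigma> (\<phi> i)) \<le> Bg \<sigma> ^ CARD('n)" by simp
  then show ?thesis
    unfolding fp_prod[OF assms] KK_def
    using C by (auto intro!: mult_nonneg_nonneg prod_nonneg gg_nonneg mult_left_mono)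
qed

lemma Fsig_bounds:
  fixes U :: "complex^'n^'n"
  assumes "\<sigma> > 0"
  shows "0 \<le> Fsig \<sigma> U \<and> Fsig \<sigma> U \<le> KK \<sigma> TYPE('n)"
  unfolding Fsig_def by (rule fp_bounds[OF assms])

lemma bl_mv: "bounded_linear (\<lambda>x::complex^'n. (A::complex^'n^'n) *v x)"
proof -
  have "linear (\<lambda>x::complex^'n. A *v x)"
  proof (rule linearI)
    show "A *v (x + y) = A *v x + A *v y" for x y by (rule matrix_vector_right_distrib)
    show "A *v (r *\<^sub>R x) = r *\<^sub>R (A *v x)" for r x
      by (simp add: vec_eq_iff matrix_vector_mult_def scaleR_sum_right mult_scaleR_right)
  qed
  then show ?thesis by (simp add: linear_conv_bounded_linear)
qed

lemma norm_vec_le_sum: "norm (x::complex^'n) \<le> (\<Sum>i\<in>UNIV. norm (x $ i))"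
  unfolding norm_vec_def by (rule L2_set_le_sum) simp

lemma mv_norm_le: "norm ((A::complex^'n^'n) *v x) \<le> (\<Sum>i\<in>UNIV. \<Sum>j\<in>UNIV. norm (A$i$j)) * norm x"
proof -
  have "norm (A *v x) \<le> (\<Sum>i\<in>UNIV. norm ((A *v x) $ i))" by (rule norm_vec_le_sum)
  also have "\<dots> \<le> (\<Sum>i\<in>UNIV. \<Sum>j\<in>UNIV. norm (A$i$j) * norm x)"
  proof (rule sum_mono)
    fix i
    have "norm ((A *v x) $ i) = norm (\<Sum>j\<in>UNIV. A$i$j * x$j)" by (simp add: matrix_vector_mult_def)
    also have "\<dots> \<le> (\<Sum>j\<in>UNIV. norm (A$i$j * x$j))" by (rule norm_sum)
    also have "\<dots> \<le> (\<Sum>j\<in>UNIV. norm (A$i$j) * norm x)"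
      by (intro sum_mono) (simp add: norm_mult mult_left_mono[OF Finite_Cartesian_Product.norm_nth_le norm_ge_zero])
    finally show "norm ((A *v x) $ i) \<le> (\<Sum>j\<in>UNIV. norm (A$i$j) * norm x)" .
  qed
  also have "\<dots> = (\<Sum>i\<in>UNIV. \<Sum>j\<in>UNIV. norm (A$i$j)) * norm x"
    by (simp add: sum_distrib_right)
  finally show ?thesis .
qed

lemma opnorm_le_sum: "opnorm (A::complex^'n^'n) \<le> (\<Sum>i\<in>UNIV. \<Sum>j\<in>UNIV. norm (A$i$j))"
  unfolding opnorm_def by (rule onorm_le) (rule mv_norm_le)

lemma opnorm_le_norm: "opnorm (A::complex^'n^'n) \<le> real CARD('n) * real CARD('n) * norm A"
proof -
  have "(\<Sum>i\<in>(UNIV::'n set). \<Sum>j\<in>(UNIV::'n set). norm (A$i$j)) \<le> (\<Sum>i\<in>(UNIV::'n set). \<Sum>j\<in>(UNIV::'n set). norm A)"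
    by (intro sum_mono order_trans[OF Finite_Cartesian_Product.norm_nth_le Finite_Cartesian_Product.norm_nth_le])
  then show ?thesis using opnorm_le_sum[of A] by simp
qed

lemma opnorm_nonneg: "0 \<le> opnorm (A::complex^'n^'n)"
  unfolding opnorm_def by (rule onorm_pos_le[OF bl_mv])

lemma opnorm_triangle: "opnorm (A::complex^'n^'n) \<le> opnorm B + opnorm (A - B)"
  unfolding opnorm_def
proof (rule onorm_le)
  fix x
  have "norm (A *v x) = norm (B *v x + (A - B) *v x)" by (simp add: matrix_vector_mult_diff_rdistrib)
  also have "\<dots> \<le> norm (B *v x) + norm ((A - B) *v x)" by (rule norm_triangle_ineq)
  also have "\<dots> \<le> onorm ((*v) B) * norm x + onorm ((*v) (A - B)) * norm x"
    by (intro add_mono onorm[OF bl_mv])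
  finally show "norm (A *v x) \<le> (onorm ((*v) B) + onorm ((*v) (A - B))) * norm x"
    by (simp add: algebra_simps)
qed

definition LL :: "'n::finite itself \<Rightarrow> real" where "LL _ = real CARD('n) * real CARD('n)"

lemma opnorm_lip: "opnorm (A::complex^'n^'n) \<le> opnorm B + LL TYPE('n) * dist A B"
  using opnorm_triangle[of A B] opnorm_le_norm[of "A - B"] by (simp add: LL_def dist_norm)

lemma opnorm_cont: "continuous_on UNIV (opnorm :: complex^'n^'n \<Rightarrow> real)"
proof (rule lipschitz_on_continuous_on[where L = "LL TYPE('n)"], rule lipschitz_onI)
  fix A B :: "complex^'n^'n"
  show "dist (opnorm A) (opnorm B) \<le> LL TYPE('n) * dist A B"
    using opnorm_lip[of A B] opnorm_lip[of B A] by (simp add: dist_real_def dist_commute abs_le_iff)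
qed (simp add: LL_def)

lemma cd1: "chan_dist U (mat 1) = (INF \<phi>::real. opnorm (U - mat (exp (\<i> * complex_of_real \<phi>))))"
  unfolding chan_dist_def by simp

lemma cd_bdd: "bdd_below (range (\<lambda>\<phi>::real. opnorm (U - mat (exp (\<i> * complex_of_real \<phi>)))))"
  by (rule bdd_belowI[of _ 0]) (auto simp: opnorm_nonneg)

lemma cd_le_opnorm: "chan_dist U (mat 1) \<le> opnorm (U - mat 1)"
proof -
  have "chan_dist U (mat 1) \<le> opnorm (U - mat (exp (\<i> * complex_of_real 0)))"
    unfolding cd1 by (rule cINF_lower[OF cd_bdd]) simp
  then show ?thesis by simp
qed

lemma cd_lip: "chan_dist U (mat 1) \<le> chan_dist V (mat 1) + LL TYPE('n) * dist U (V::complex^'n^'n)"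
proof -
  have "chan_dist U (mat 1) - LL TYPE('n) * dist U V \<le> chan_dist V (mat 1)"
    unfolding cd1
  proof (rule cINF_greatest)
    fix \<phi> :: real
    have "(INF \<phi>::real. opnorm (U - mat (exp (\<i> * complex_of_real \<phi>)))) \<le> opnorm (U - mat (exp (\<i> * complex_of_real \<phi>)))"
      by (rule cINF_lower[OF cd_bdd]) simp
    also have "\<dots> \<le> opnorm (V - mat (exp (\<i> * complex_of_real \<phi>))) + LL TYPE('n) * dist (U - mat (exp (\<i> * complex_of_real \<phi>))) (V - mat (exp (\<i> * complex_of_real \<phi>)))"
      by (rule opnorm_lip)
    also have "dist (U - mat (exp (\<i> * complex_of_real \<phi>))) (V - mat (exp (\<i> * complex_of_real \<phi>))) = dist U V"
      by (simp add: dist_norm)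
    finally show "(INF \<phi>::real. opnorm (U - mat (exp (\<i> * complex_of_real \<phi>)))) - LL TYPE('n) * dist U V \<le> opnorm (V - mat (exp (\<i> * complex_of_real \<phi>)))"
      by simp
  qed simp
  then show ?thesis by simp
qed

lemma cd_cont: "continuous_on UNIV (\<lambda>U::complex^'n^'n. chan_dist U (mat 1))"
proof (rule lipschitz_on_continuous_on[where L = "LL TYPE('n)"], rule lipschitz_onI)
  fix A B :: "complex^'n^'n"
  show "dist (chan_dist A (mat 1)) (chan_dist B (mat 1)) \<le> LL TYPE('n) * dist A B"
    using cd_lip[of A B] cd_lip[of B A] by (simp add: dist_real_def dist_commute abs_le_iff)
qed (simp add: LL_def)

lemma opnorm_scalar:
  assumes "cmod c = 1"
  shows "opnorm (mat c ** M) = opnorm (M::complex^'n^'n)"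
proof -
  have "norm ((mat c ** M) *v x) = norm (M *v x)" for x
  proof -
    have "((mat c ** M) *v x) $ i = c * (M *v x) $ i" for i
      by (simp add: matrix_vector_mult_def mat_mul_left_entry sum_distrib_left mult_ac)
    then show ?thesis using assms by (simp add: norm_vec_def norm_mult)
  qed
  then show ?thesis unfolding opnorm_def onorm_def by simp
qed

lemma mat_diff: "mat a - mat b = (mat (a - b) :: 'a::ab_group_add^'n^'n)"
  by (simp add: vec_eq_iff mat_def)

lemma cd_phase: "chan_dist (mat (exp (\<i> * complex_of_real \<psi>)) ** U) (mat 1) = chan_dist (U::complex^'n^'n) (mat 1)"
proof -
  define g where "g \<phi> = opnorm (U - mat (exp (\<i> * complex_of_real \<phi>)))" for \<phi>
  have c: "cmod (exp (\<i> * complex_of_real \<psi>)) = 1" by (rule norm_exp_i_times)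
  have e: "opnorm (mat (exp (\<i> * complex_of_real \<psi>)) ** U - mat (exp (\<i> * complex_of_real \<phi>))) = g (\<phi> - \<psi>)" for \<phi>
  proof -
    have ex: "exp (\<i> * complex_of_real \<psi>) * exp (\<i> * complex_of_real (\<phi> - \<psi>)) = exp (\<i> * complex_of_real \<phi>)"
      by (simp add: exp_add[symmetric] algebra_simps)
    have "mat (exp (\<i> * complex_of_real \<psi>)) ** U - mat (exp (\<i> * complex_of_real \<phi>))
        = mat (exp (\<i> * complex_of_real \<psi>)) ** (U - mat (exp (\<i> * complex_of_real (\<phi> - \<psi>))))"
      by (simp add: vec_eq_iff mat_mul_left_entry mat_entry right_diff_distrib ex[symmetric])
    then show ?thesis unfolding g_def using opnorm_scalar[OF c] by simp
  qed
  have "(\<lambda>\<phi>. g (\<phi> - \<psi>)) ` UNIV = g ` UNIV"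
  proof
    show "(\<lambda>\<phi>. g (\<phi> - \<psi>)) ` UNIV \<subseteq> g ` UNIV" by auto
    show "g ` UNIV \<subseteq> (\<lambda>\<phi>. g (\<phi> - \<psi>)) ` UNIV"
    proof
      fix y assume "y \<in> g ` UNIV"
      then obtain \<phi> where "y = g \<phi>" by auto
      then show "y \<in> (\<lambda>\<phi>. g (\<phi> - \<psi>)) ` UNIV" by (intro image_eqI[of _ _ "\<phi> + \<psi>"]) auto
    qed
  qed
  then show ?thesis unfolding cd1 e g_def by simp
qed

lemma in_restr: "C \<in> sets borel \<Longrightarrow> G \<inter> C \<in> sets (restrict_space borel G)"
  unfolding sets_restrict_space by (rule image_eqI[of _ _ C]) auto

lemma det_cont: "continuous_on UNIV (\<lambda>p::'a::topological_space. det (mat z - f p :: complex^'n^'n))"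
  if "continuous_on UNIV f"
  unfolding det_def
  by (intro continuous_intros continuous_on_component that)

lemma closed_T:
  assumes "\<sigma> > 0"
  shows "closed {p :: (real^'n) \<times> (complex^'n^'n).
     (\<forall>z. det (mat z - snd p) = (\<Prod>j\<in>UNIV. z - exp (\<i> * complex_of_real (fst p $ j)))) \<and> c \<le> fp \<sigma> (\<lambda>j. fst p $ j)}"
proof -
  have gc: "continuous_on UNIV (gg \<sigma>)"
    by (intro continuous_at_imp_continuous_on ballI gg_isCont[OF assms])
  have fpc: "continuous_on UNIV (\<lambda>p :: (real^'n) \<times> (complex^'n^'n). fp \<sigma> (\<lambda>j. fst p $ j))"
  proof -
    have c1: "continuous_on UNIV (\<lambda>p :: (real^'n) \<times> (complex^'n^'n). gg \<sigma> (fst p $ j))" for j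
      by (rule continuous_on_compose2[OF gc]) (auto intro!: continuous_intros continuous_on_component)
    show ?thesis unfolding fp_prod[OF assms]
      by (intro continuous_intros c1)
  qed
  have eqc: "closed {p :: (real^'n) \<times> (complex^'n^'n). det (mat z - snd p) = (\<Prod>j\<in>UNIV. z - exp (\<i> * complex_of_real (fst p $ j)))}" for z
    by (intro closed_Collect_eq det_cont continuous_intros continuous_on_component)
  have "{p :: (real^'n) \<times> (complex^'n^'n).
     (\<forall>z. det (mat z - snd p) = (\<Prod>j\<in>UNIV. z - exp (\<i> * complex_of_real (fst p $ j)))) \<and> c \<le> fp \<sigma> (\<lambda>j. fst p $ j)}
     = (\<Inter>z. {p. det (mat z - snd p) = (\<Prod>j\<in>UNIV. z - exp (\<i> * complex_of_real (fst p $ j)))}) \<inter> {p. c \<le> fp \<sigma> (\<lambda>j. fst p $ j)}"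
    by auto
  moreover have "closed \<dots>"
    by (intro closed_Int closed_INT ballI eqc closed_Collect_le continuous_on_const fpc)
  ultimately show ?thesis by simp
qed

lemma Fsig_meas:
  assumes "\<sigma> > 0"
  shows "(Fsig \<sigma> :: complex^'n^'n \<Rightarrow> real) \<in> borel_measurable (restrict_space borel unitary_group)"
proof -
  define a :: "real^'n" where "a = (\<chi> j. - pi)"
  define b :: "real^'n" where "b = (\<chi> j. pi)"
  have "{w \<in> space (restrict_space borel (unitary_group :: (complex^'n^'n) set)). c \<le> Fsig \<sigma> w} \<in> sets (restrict_space borel unitary_group)" for c
  proof -
    define T where "T = {p :: (real^'n) \<times> (complex^'n^'n).
     (\<forall>z. det (mat z - snd p) = (\<Prod>j\<in>UNIV. z - exp (\<i> * complex_of_real (fst p $ j)))) \<and> c \<le> fp \<sigma> (\<lambda>j. fst p $ j)}"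
    define C where "C = {U. \<exists>v. v \<in> cbox a b \<and> (v, U) \<in> T}"
    have cC: "closed C" unfolding C_def T_def
      by (rule closed_compact_projection[OF compact_cbox closed_T[OF assms]])
    have "{w \<in> space (restrict_space borel (unitary_group :: (complex^'n^'n) set)). c \<le> Fsig \<sigma> w} = unitary_group \<inter> C"
    proof (intro equalityI subsetI)
      fix U :: "complex^'n^'n" assume U: "U \<in> {w \<in> space (restrict_space borel unitary_group). c \<le> Fsig \<sigma> w}"
      then have Uu: "unitary_mat U" and cF: "c \<le> Fsig \<sigma> U" by (auto simp: space_restrict_space unitary_group_def)
      obtain \<phi> :: "'n \<Rightarrow> real" where e: "eigenphases U \<phi>" and bd: "\<forall>j. -pi < \<phi> j \<and> \<phi> j \<le> pi"
        using eig_exists[OF Uu] by blast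
      define v :: "real^'n" where "v = (\<chi> j. \<phi> j)"
      have "v \<in> cbox a b" using bd by (auto simp: mem_box_cart a_def b_def v_def less_imp_le)
      moreover have "(\<lambda>j. v $ j) = \<phi>" by (simp add: v_def)
      ultimately have "U \<in> C" using e cF Fsig_eq[OF assms Uu e]
        by (auto simp: C_def T_def eigenphases_def intro!: exI[of _ v])
      then show "U \<in> unitary_group \<inter> C" using Uu by (simp add: unitary_group_def)
    next
      fix U :: "complex^'n^'n" assume U: "U \<in> unitary_group \<inter> C"
      then have Uu: "unitary_mat U" by (simp add: unitary_group_def)
      from U obtain v where "(v, U) \<in> T" by (auto simp: C_def)
      then have e: "eigenphases U (\<lambda>j. v $ j)" and cf: "c \<le> fp \<sigma> (\<lambda>j. v $ j)"
        by (auto simp: T_def eigenphases_def)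
      then show "U \<in> {w \<in> space (restrict_space borel unitary_group). c \<le> Fsig \<sigma> w}"
        using Fsig_eq[OF assms Uu e] Uu by (auto simp: space_restrict_space unitary_group_def)
    qed
    then show ?thesis by (simp only:) (rule in_restr[OF borel_closed[OF cC]])
  qed
  then show ?thesis by (simp add: borel_measurable_iff_ge)
qed

definition phase :: "real \<times> (complex^'n^'n) \<Rightarrow> complex^'n^'n" where
  "phase p = mat (exp (\<i> * complex_of_real (fst p))) ** snd p"

lemma phase_cont: "continuous_on UNIV (phase :: real \<times> (complex^'n^'n) \<Rightarrow> complex^'n^'n)"
proof -
  have eq: "phase = (\<lambda>p::real \<times> (complex^'n^'n). \<chi> i j. exp (\<i> * complex_of_real (fst p)) * snd p $ i $ j)"
    by (simp add: fun_eq_iff vec_eq_iff phase_def mat_mul_left_entry)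
  show ?thesis unfolding eq
    by (intro continuous_on_vec_lambda continuous_intros continuous_on_component)
qed

theorem lemma10:
  fixes \<mu> :: "(complex^'n^'n) measure" and \<sigma> r :: real
  assumes "haar_measure \<mu>" and "\<sigma> > 0" and "r \<ge> 0"
  shows "(LINT U:{U\<in>unitary_group. chan_dist U (mat 1) > r}|\<mu>. Ftilde \<sigma> U)
         \<le> (LINT U:{U\<in>unitary_group. opnorm (U - mat 1) > r}|\<mu>. Fsig \<sigma> U)"
proof -
  define G where "G = (unitary_group :: (complex^'n^'n) set)"
  have ps: "prob_space \<mu>" and s\<mu>: "sets \<mu> = sets (restrict_space borel G)" and sp\<mu>: "space \<mu> = G"
    and inv: "\<And>V. V \<in> G \<Longrightarrow> distr \<mu> \<mu> (\<lambda>U. V ** U) = \<mu>"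
    using assms(1) unfolding haar_measure_def G_def by auto
  interpret P: prob_space \<mu> by (rule ps)
  define S where "S = {U\<in>G. chan_dist U (mat 1) > r}"
  define T where "T = {U\<in>G. opnorm (U - mat 1) > r}"
  define F where "F = (Fsig \<sigma> :: complex^'n^'n \<Rightarrow> real)"
  define K where "K = KK \<sigma> TYPE('n)"
  define I where "I = {0..2*pi}"
  have Fb: "0 \<le> F U \<and> F U \<le> K" for U using Fsig_bounds[OF assms(2)] by (simp add: F_def K_def)
  have K0: "0 \<le> K" using Fb order_trans by blast
  have mcong: "measurable \<mu> N = measurable (restrict_space borel G) N" for N :: "'b measure"
    by (rule measurable_cong_sets[OF s\<mu> refl])
  have mcong2: "measurable N \<mu> = measurable N (restrict_space borel G)" for N :: "'b measure"
    by (rule measurable_cong_sets[OF refl s\<mu>])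
  have Fm: "F \<in> borel_measurable \<mu>" unfolding mcong F_def G_def by (rule Fsig_meas[OF assms(2)])
  have Sm: "S \<in> sets \<mu>"
  proof -
    have "S = G \<inter> {U. r < chan_dist U (mat 1)}" by (auto simp: S_def)
    moreover have "open {U::complex^'n^'n. r < chan_dist U (mat 1)}"
      by (intro open_Collect_less continuous_on_const cd_cont)
    ultimately show ?thesis using in_restr[OF borel_open] s\<mu> by simp
  qed
  have Tm: "T \<in> sets \<mu>"
  proof -
    have "T = G \<inter> {U. r < opnorm (U - mat 1)}" by (auto simp: T_def)
    moreover have "continuous_on UNIV (\<lambda>U::complex^'n^'n. opnorm (U - mat 1))"
      by (rule continuous_on_compose2[OF opnorm_cont]) (auto intro!: continuous_intros)
    then have "open {U::complex^'n^'n. r < opnorm (U - mat 1)}"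
      by (intro open_Collect_less continuous_on_const)
    ultimately show ?thesis using in_restr[OF borel_open] s\<mu> by simp
  qed
  have idm: "(\<lambda>x. x) \<in> measurable \<mu> (borel :: (complex^'n^'n) measure)"
    unfolding mcong by (rule measurable_restrict_space1) simp
  have phG: "phase (t, U) \<in> G" if "U \<in> G" for t U
    using that unitary_group_phase by (simp add: phase_def G_def)
  have meas_ph: "(\<lambda>U. phase (t, U)) \<in> measurable \<mu> \<mu>" for t
  proof -
    have c: "continuous_on UNIV (\<lambda>U::complex^'n^'n. phase (t, U))"
      by (rule continuous_on_compose2[OF phase_cont]) (auto intro!: continuous_intros)
    have "(\<lambda>U::complex^'n^'n. phase (t, U)) \<in> borel_measurable \<mu>"
      by (rule measurable_compose[OF idm borel_measurable_continuous_onI[OF c]])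
    then show ?thesis unfolding mcong2
      by (intro measurable_restrict_space2) (auto simp: sp\<mu> phG)
  qed
  have meas_pair: "phase \<in> measurable (lborel \<Otimes>\<^sub>M \<mu>) \<mu>"
  proof -
    have f1: "fst \<in> measurable (lborel \<Otimes>\<^sub>M \<mu>) (borel :: real measure)"
      using measurable_fst[of lborel \<mu>] measurable_cong_sets[OF refl sets_lborel] by simp
    have f2: "snd \<in> measurable (lborel \<Otimes>\<^sub>M \<mu>) (borel :: (complex^'n^'n) measure)"
      by (rule measurable_compose[OF measurable_snd idm])
    have "(\<lambda>p. (fst p, snd p)) \<in> measurable ((lborel :: real measure) \<Otimes>\<^sub>M \<mu>) (borel \<Otimes>\<^sub>M borel)"
      using measurable_Pair[OF f1 f2] by simp
    then have "(\<lambda>p. p) \<in> borel_measurable ((lborel :: real measure) \<Otimes>\<^sub>M \<mu>)"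
      by (simp add: borel_prod)
    then have "(\<lambda>p. phase p) \<in> borel_measurable ((lborel :: real measure) \<Otimes>\<^sub>M \<mu>)"
      by (rule borel_measurable_continuous_on[OF phase_cont])
    then show ?thesis unfolding mcong2
      by (intro measurable_restrict_space2) (auto simp: space_pair_measure sp\<mu> phG)
  qed
  define H where "H p = indicator S (snd p) * (indicator I (fst p) * F (phase p))" for p
  have Hm: "H \<in> borel_measurable (lborel \<Otimes>\<^sub>M \<mu>)"
  proof -
    have 1: "(\<lambda>p. indicator S (snd p) :: real) \<in> borel_measurable (lborel \<Otimes>\<^sub>M \<mu>)"
      by (rule measurable_compose[OF measurable_snd borel_measurable_indicator[OF Sm]])
    have Im: "I \<in> sets lborel" by (simp add: I_def)
    have 2: "(\<lambda>p. indicator I (fst p) :: real) \<in> borel_measurable (lborel \<Otimes>\<^sub>M \<mu>)"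
      by (rule measurable_compose[OF measurable_fst borel_measurable_indicator[OF Im]])
    have 3: "(\<lambda>p. F (phase p)) \<in> borel_measurable (lborel \<Otimes>\<^sub>M \<mu>)"
      by (rule measurable_compose[OF meas_pair Fm])
    show ?thesis unfolding H_def by (intro borel_measurable_times 1 2 3)
  qed
  have sf\<mu>: "sigma_finite_measure \<mu>" by (rule prob_space_imp_sigma_finite[OF ps])
  have psf: "pair_sigma_finite lborel \<mu>"
    unfolding pair_sigma_finite_def using sigma_finite_lborel sf\<mu> by simp
  have Hint: "integrable (lborel \<Otimes>\<^sub>M \<mu>) H"
  proof -
    define B where "B p = K * indicator (I \<times> space \<mu>) p" for p
    have IS: "I \<times> space \<mu> \<in> sets (lborel \<Otimes>\<^sub>M \<mu>)" by (intro pair_measureI) (auto simp: I_def)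
    have "emeasure (lborel \<Otimes>\<^sub>M \<mu>) (I \<times> space \<mu>) = emeasure lborel I * emeasure \<mu> (space \<mu>)"
      by (rule sigma_finite_measure.emeasure_pair_measure_Times[OF sf\<mu>]) (auto simp: I_def)
    also have "\<dots> = ennreal (2*pi)" by (simp add: I_def P.emeasure_space_1)
    finally have "emeasure (lborel \<Otimes>\<^sub>M \<mu>) (I \<times> space \<mu>) < \<infinity>" by (simp add: ennreal_less_top)
    then have Bi: "integrable (lborel \<Otimes>\<^sub>M \<mu>) B"
      unfolding B_def by (intro integrable_mult_right integrable_real_indicator IS)
    show ?thesis
    proof (rule Bochner_Integration.integrable_bound[OF Bi Hm], rule AE_I2)
      fix p :: "real \<times> (complex^'n^'n)" assume p: "p \<in> space (lborel \<Otimes>\<^sub>M \<mu>)"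
      then have sp: "snd p \<in> space \<mu>" by (auto simp: space_pair_measure)
      have h0: "0 \<le> H p" unfolding H_def using Fb by simp
      have "H p \<le> indicator I (fst p) * K"
        unfolding H_def using Fb K0 by (auto simp: indicator_def)
      also have "\<dots> = B p" using sp by (cases p) (auto simp: B_def indicator_def)
      finally show "norm (H p) \<le> norm (B p)" using h0 by simp
    qed
  qed
  have Fub: "(LINT U|\<mu>. LINT \<phi>|lborel. H (\<phi>, U)) = (LINT \<phi>|lborel. LINT U|\<mu>. H (\<phi>, U))"
    using pair_sigma_finite.Fubini_integral[OF psf, of "\<lambda>\<phi> U. H (\<phi>, U)"] Hint by simp
  define KS where "KS = (LINT U|\<mu>. indicator S U * F U)"
  have fSm: "(\<lambda>V. indicator S V * F V) \<in> borel_measurable \<mu>"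
    by (intro borel_measurable_times borel_measurable_indicator[OF Sm] Fm)
  have inner: "(LINT U|\<mu>. H (\<phi>, U)) = indicator I \<phi> * KS" for \<phi>
  proof -
    have "(LINT U|\<mu>. H (\<phi>, U)) = (LINT U|\<mu>. indicator I \<phi> * (indicator S U * F (phase (\<phi>, U))))"
      unfolding H_def by (simp add: mult_ac)
    also have "\<dots> = indicator I \<phi> * (LINT U|\<mu>. indicator S U * F (phase (\<phi>, U)))"
      by (rule integral_mult_right_zero)
    also have "(LINT U|\<mu>. indicator S U * F (phase (\<phi>, U))) = (LINT U|\<mu>. (\<lambda>V. indicator S V * F V) (phase (\<phi>, U)))"
    proof (rule Bochner_Integration.integral_cong[OF refl])
      fix U assume "U \<in> space \<mu>"
      then have UG: "U \<in> G" by (simp add: sp\<mu>)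
      have "chan_dist (phase (\<phi>, U)) (mat 1) = chan_dist U (mat 1)"
        by (simp add: phase_def cd_phase)
      then have "indicator S (phase (\<phi>, U)) = (indicator S U :: real)"
        using UG phG[OF UG, of \<phi>] by (simp add: S_def indicator_def)
      then show "indicator S U * F (phase (\<phi>, U)) = (\<lambda>V. indicator S V * F V) (phase (\<phi>, U))" by simp
    qed
    also have "\<dots> = integral\<^sup>L (distr \<mu> \<mu> (\<lambda>U. phase (\<phi>, U))) (\<lambda>V. indicator S V * F V)"
      by (rule integral_distr[OF meas_ph fSm, symmetric])
    also have "distr \<mu> \<mu> (\<lambda>U. phase (\<phi>, U)) = \<mu>"
    proof -
      have "mat (exp (\<i> * complex_of_real \<phi>)) \<in> G"
        using unitary_mat_scalar[OF norm_exp_i_times] by (simp add: G_def unitary_group_def)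
      then show ?thesis using inv by (simp add: phase_def)
    qed
    finally show ?thesis by (simp add: KS_def)
  qed
  have outer: "(LINT \<phi>|lborel. indicator I \<phi> * KS) = 2 * pi * KS"
  proof -
    have "(LINT \<phi>|lborel. indicator I \<phi> * KS) = (LINT \<phi>|lborel. indicator I \<phi>) * KS"
      by (rule integral_mult_left_zero)
    also have "(LINT \<phi>|lborel. indicator I \<phi>) = measure lborel I"
      by (rule has_bochner_integral_integral_eq[OF has_bochner_integral_real_indicator])
         (auto simp: I_def ennreal_less_top)
    also have "measure lborel I = 2 * pi" by (simp add: I_def)
    finally show ?thesis .
  qed
  have LHS: "(LINT U:S|\<mu>. Ftilde \<sigma> U) = KS"
  proof -
    have pw: "indicator S U *\<^sub>R Ftilde \<sigma> U = (1 / (2*pi)) * (LINT \<phi>|lborel. H (\<phi>, U))" for U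
    proof -
      have "(LINT \<phi>|lborel. H (\<phi>, U)) = indicator S U * (LINT \<phi>|lborel. indicator I \<phi> * F (phase (\<phi>, U)))"
        unfolding H_def by (simp add: integral_mult_right_zero)
      then show ?thesis
        unfolding Ftilde_def set_lebesgue_integral_def by (simp add: I_def F_def phase_def)
    qed
    have "(LINT U:S|\<mu>. Ftilde \<sigma> U) = (LINT U|\<mu>. (1 / (2*pi)) * (LINT \<phi>|lborel. H (\<phi>, U)))"
      unfolding set_lebesgue_integral_def pw ..
    also have "\<dots> = (1 / (2*pi)) * (LINT U|\<mu>. LINT \<phi>|lborel. H (\<phi>, U))"
      by (rule integral_mult_right_zero)
    also have "\<dots> = (1 / (2*pi)) * (2 * pi * KS)" unfolding Fub inner outer ..
    finally show ?thesis by simp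
  qed
  have RHS: "(LINT U:T|\<mu>. Fsig \<sigma> U) = (LINT U|\<mu>. indicator T U * F U)"
    unfolding set_lebesgue_integral_def F_def by simp
  have "KS \<le> (LINT U|\<mu>. indicator T U * F U)"
    unfolding KS_def
  proof (rule integral_mono)
    show "integrable \<mu> (\<lambda>U. indicator S U * F U)"
      by (rule P.integrable_const_bound[of _ K]) (use Fb K0 fSm in \<open>auto simp: indicator_def\<close>)
    have fTm: "(\<lambda>V. indicator T V * F V) \<in> borel_measurable \<mu>"
      by (intro borel_measurable_times borel_measurable_indicator[OF Tm] Fm)
    show "integrable \<mu> (\<lambda>U. indicator T U * F U)"
      by (rule P.integrable_const_bound[of _ K]) (use Fb K0 fTm in \<open>auto simp: indicator_def\<close>)
    fix U assume "U \<in> space \<mu>"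
    have "S \<subseteq> T" unfolding S_def T_def using cd_le_opnorm order_less_le_trans by fastforce
    then show "indicator S U * F U \<le> indicator T U * F U"
      using Fb[of U] by (auto simp: indicator_def)
  qed
  then have "(LINT U:S|\<mu>. Ftilde \<sigma> U) \<le> (LINT U:T|\<mu>. Fsig \<sigma> U)" using LHS RHS by simp
  then show ?thesis by (simp add: S_def T_def G_def)
qed

end
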